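(* Let $G=(V,E)$ be a finite, connected, undirected graph with $n\ge2$ vertices and let $r>1$. For any $\epsilon\in(0,1)$ and any $t\ge\frac{r}{r-1}n^3\phi(G)/\epsilon$, the Moran process on $G$ with fitness $r$ (started from a single mutant) reaches absorption within $t$ steps with probability at least $1-\epsilon$.
   Context: The Moran process on $G$ with mutant fitness $r>0$ is the Markov chain $(X_i)_{i\ge0}$ whose state $X_i\subseteq V$ is the set of vertices occupied by mutants; every other vertex is occupied by a non-mutant of fitness $1$. Write $W(S)=r|S|+|V\setminus S|$ for the total fitness. Given $X_i=S$, one step is: choose a vertex $x$ with probability $r/W(S)$ if $x\in S$ and $1/W(S)$ if $x\notin S$; then choose a neighbour $y$ of $x$ uniformly at random; set $X_{i+1}=S\cup\{y\}$ if $x\in S$ and $X_{i+1}=S\setminus\{y\}$ if $x\notin S$. The process starts from $X_0=\{x\}$ for a single vertex $x$. Absorption means reaching $X_i=\emptyset$ or $X_i=V$. For $X\subseteq V$, $\phi(X)=\sum_{x\in X}\frac{1}{\deg x}$, and $\phi(G)=\phi(V)$. *)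

theory Defs
  imports "HOL-Probability.Probability_Mass_Function"
begin

definition graph_deg :: "('a \<Rightarrow> 'a \<Rightarrow> bool) \<Rightarrow> 'a set \<Rightarrow> 'a \<Rightarrow> nat" where
  "graph_deg E V x = card {y \<in> V. E x y}"

definition graph_connected :: "('a \<Rightarrow> 'a \<Rightarrow> bool) \<Rightarrow> 'a set \<Rightarrow> bool" where
  "graph_connected E V \<longleftrightarrow> (\<forall>u\<in>V. \<forall>v\<in>V. (\<lambda>a b. a \<in> V \<and> b \<in> V \<and> E a b)\<^sup>*\<^sup>* u v)"

definition phi_set :: "('a \<Rightarrow> 'a \<Rightarrow> bool) \<Rightarrow> 'a set \<Rightarrow> 'a set \<Rightarrow> real" where
  "phi_set E V X = (\<Sum>x\<in>X. 1 / real (graph_deg E V x))"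

definition total_fitness :: "'a set \<Rightarrow> real \<Rightarrow> 'a set \<Rightarrow> real" where
  "total_fitness V r S = r * real (card S) + real (card (V - S))"

definition moran_step :: "('a \<Rightarrow> 'a \<Rightarrow> bool) \<Rightarrow> 'a set \<Rightarrow> real \<Rightarrow> 'a set \<Rightarrow> 'a set pmf" where
  "moran_step E V r S =
     bind_pmf
       (embed_pmf (\<lambda>x. if x \<in> V then (if x \<in> S then r else 1) / total_fitness V r S else 0))
       (\<lambda>x. map_pmf (\<lambda>y. if x \<in> S then insert y S else S - {y}) (pmf_of_set {y \<in> V. E x y}))"

text \<open>Distribution of the trajectory (X_t, ..., X_1, X_0) (most recent state first).\<close>
fun moran_path :: "('a \<Rightarrow> 'a \<Rightarrow> bool) \<Rightarrow> 'a set \<Rightarrow> real \<Rightarrow> 'a set \<Rightarrow> nat \<Rightarrow> 'a set list pmf" where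
  "moran_path E V r S0 0 = return_pmf [S0]"
| "moran_path E V r S0 (Suc t) =
     bind_pmf (moran_path E V r S0 t) (\<lambda>p. map_pmf (\<lambda>S'. S' # p) (moran_step E V r (hd p)))"

end

theory Submission
  imports Defs
begin

locale moran =
  fixes V :: "'a set" and E :: "'a \<Rightarrow> 'a \<Rightarrow> bool" and r :: real
  assumes finV: "finite V" and cardV: "card V \<ge> 2"
    and Ein: "\<And>u v. E u v \<Longrightarrow> u \<in> V \<and> v \<in> V"
    and Esym: "\<And>u v. E u v \<Longrightarrow> E v u"
    and conn: "graph_connected E V"
    and r1: "r > 1"
begin

abbreviation "deg \<equiv> graph_deg E V"
abbreviation "nb x \<equiv> {y \<in> V. E x y}"
abbreviation "\<phi> \<equiv> phi_set E V"
abbreviation "W \<equiv> total_fitness V r"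

lemma nb_ne: assumes "a \<in> V" shows "nb a \<noteq> {}"
proof -
  have "\<exists>b \<in> V. b \<noteq> a"
  proof (rule ccontr)
    assume "\<not> ?thesis" then have "V \<subseteq> {a}" by auto
    then have "card V \<le> 1" using card_mono[OF finite.intros(2)[OF finite.emptyI]] by fastforce
    with cardV show False by simp
  qed
  then obtain b where b: "b \<in> V" "b \<noteq> a" by blast
  have "(\<lambda>a b. a \<in> V \<and> b \<in> V \<and> E a b)\<^sup>*\<^sup>* a b" using conn assms b unfolding graph_connected_def by blast
  then show ?thesis using b(2)
    by (cases rule: converse_rtranclpE) auto
qed

lemma set_nb: "a \<in> V \<Longrightarrow> set_pmf (pmf_of_set (nb a)) = nb a"
  using nb_ne finV by (intro set_pmf_of_set) auto

lemma deg_pos: "a \<in> V \<Longrightarrow> deg a > 0"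
  unfolding graph_deg_def using nb_ne finV by (simp add: card_gt_0_iff)

lemma deg_le: "deg a \<le> card V"
  unfolding graph_deg_def using finV by (intro card_mono) auto

lemma cross_edge:
  assumes "S \<subseteq> V" "S \<noteq> {}" "S \<noteq> V"
  shows "\<exists>a b. a \<in> S \<and> b \<in> V \<and> b \<notin> S \<and> E a b"
proof -
  obtain u where u: "u \<in> S" using assms by blast
  obtain v where v: "v \<in> V" "v \<notin> S" using assms by blast
  have "(\<lambda>a b. a \<in> V \<and> b \<in> V \<and> E a b)\<^sup>*\<^sup>* u v" using conn u v assms(1) unfolding graph_connected_def by blast
  then have "v \<notin> S \<longrightarrow> (\<exists>a b. a \<in> S \<and> b \<in> V \<and> b \<notin> S \<and> E a b)"
  proof (induction rule: rtranclp_induct)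
    case base then show ?case using u by blast
  next
    case (step y z) then show ?case by blast
  qed
  then show ?thesis using v by blast
qed

lemma phi_nonneg: "\<phi> X \<ge> 0"
  unfolding phi_set_def by (intro sum_nonneg) auto

lemma phi_mono: "finite Y \<Longrightarrow> X \<subseteq> Y \<Longrightarrow> \<phi> X \<le> \<phi> Y"
  unfolding phi_set_def by (intro sum_mono2) auto

lemma W_ge: assumes "S \<subseteq> V" shows "W S \<ge> card V" "W S \<le> r * card V"
proof -
  have c: "card S + card (V - S) = card V" using assms finV
    by (metis card_Diff_subset card_mono finite_subset le_add_diff_inverse)
  have "card S \<ge> (0::real)" by simp
  then show "W S \<ge> card V" using r1 c unfolding total_fitness_def
    by (smt (verit) mult_le_cancel_right1 of_nat_add)
  show "W S \<le> r * card V" using r1 c unfolding total_fitness_def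
    by (smt (verit, ccfv_SIG) distrib_left mult_le_cancel_right1 of_nat_0_le_iff of_nat_add)
qed

definition w :: "'a set \<Rightarrow> 'a \<Rightarrow> real" where
  "w S x = (if x \<in> V then (if x \<in> S then r else 1) / W S else 0)"

lemma w_sum: assumes "S \<subseteq> V" shows "(\<Sum>x\<in>V. w S x) = 1"
proof -
  have Wp: "W S > 0" using W_ge[OF assms] cardV by linarith
  have "(\<Sum>x\<in>V. w S x) = (\<Sum>x\<in>V. (if x \<in> S then r else 1)) / W S"
    unfolding w_def by (simp add: sum_divide_distrib)
  also have "(\<Sum>x\<in>V. (if x \<in> S then r else 1)) = W S"
    using finV assms unfolding total_fitness_def
    by (simp add: sum.If_cases Int_absorb1 Diff_eq)
  finally show ?thesis using Wp by simp
qed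

lemma w_nonneg: assumes "S \<subseteq> V" shows "w S x \<ge> 0"
  using W_ge[OF assms] cardV r1 unfolding w_def by auto

lemma pmf_emb: assumes "S \<subseteq> V"
  shows "pmf (embed_pmf (w S)) a = w S a"
proof (rule pmf_embed_pmf)
  show "\<And>x. 0 \<le> w S x" using w_nonneg[OF assms] .
  have "(\<integral>\<^sup>+x. ennreal (w S x) \<partial>count_space UNIV) = (\<Sum>x\<in>V. ennreal (w S x))"
    by (rule nn_integral_count_space') (auto simp: finV w_def)
  also have "\<dots> = ennreal (\<Sum>x\<in>V. w S x)" using w_nonneg[OF assms] by (simp add: sum_ennreal)
  finally show "(\<integral>\<^sup>+x. ennreal (w S x) \<partial>count_space UNIV) = 1" using w_sum[OF assms] by simp
qed

lemma step_eq: "moran_step E V r S = bind_pmf (embed_pmf (w S))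
       (\<lambda>x. map_pmf (\<lambda>y. if x \<in> S then insert y S else S - {y}) (pmf_of_set (nb x)))"
  unfolding moran_step_def w_def ..

lemma set_emb: assumes "S \<subseteq> V" shows "set_pmf (embed_pmf (w S)) \<subseteq> V"
  using pmf_emb[OF assms] by (auto simp: set_pmf_eq w_def)

lemma set_step: assumes "S \<subseteq> V" shows "set_pmf (moran_step E V r S) \<subseteq> Pow V"
  using set_emb[OF assms] assms nb_ne finV unfolding step_eq by (auto split: if_splits)

definition D :: "'a set \<Rightarrow> real" where
  "D S = (\<Sum>a\<in>V. \<Sum>y\<in>V. if a \<in> S \<and> y \<notin> S \<and> E a y then 1 / (real (deg a) * real (deg y)) else 0)"

lemma phi_ins: assumes "S \<subseteq> V" "y \<in> V"
  shows "\<phi> (insert y S) = \<phi> S + (if y \<notin> S then 1 / real (deg y) else 0)"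
  using assms finite_subset[OF assms(1) finV] unfolding phi_set_def by (auto simp: insert_absorb)

lemma phi_del: assumes "S \<subseteq> V" "y \<in> V"
  shows "\<phi> (S - {y}) = \<phi> S - (if y \<in> S then 1 / real (deg y) else 0)"
  using assms finite_subset[OF assms(1) finV] unfolding phi_set_def by (auto simp: sum_diff1)

lemma inner: assumes "S \<subseteq> V" "a \<in> V"
  shows "measure_pmf.expectation (map_pmf (\<lambda>y. if a \<in> S then insert y S else S - {y}) (pmf_of_set (nb a))) \<phi>
     = \<phi> S + (if a \<in> S then (\<Sum>y\<in>V. if y \<notin> S \<and> E a y then 1 / (real (deg a) * real (deg y)) else 0)
                else - (\<Sum>y\<in>V. if y \<in> S \<and> E a y then 1 / (real (deg a) * real (deg y)) else 0))"
proof -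
  have fin: "finite (nb a)" using finV by simp
  have ne: "nb a \<noteq> {}" using nb_ne[OF assms(2)] .
  have cd: "real (card (nb a)) = real (deg a)" unfolding graph_deg_def ..
  have dp: "real (deg a) > 0" using deg_pos[OF assms(2)] by simp
  have "measure_pmf.expectation (map_pmf (\<lambda>y. if a \<in> S then insert y S else S - {y}) (pmf_of_set (nb a))) \<phi>
     = (\<Sum>y\<in>nb a. \<phi> (if a \<in> S then insert y S else S - {y})) / real (deg a)"
    using fin ne by (simp add: integral_pmf_of_set cd)
  also have "\<dots> = (\<Sum>y\<in>nb a. \<phi> S + (if a \<in> S then (if y \<notin> S then 1 / real (deg y) else 0)
       else - (if y \<in> S then 1 / real (deg y) else 0))) / real (deg a)"
    using assms by (intro arg_cong2[where f="(/)"] sum.cong refl) (auto simp: phi_ins phi_del)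
  also have "\<dots> = \<phi> S + (\<Sum>y\<in>nb a. (if a \<in> S then (if y \<notin> S then 1 / real (deg y) else 0)
       else - (if y \<in> S then 1 / real (deg y) else 0))) / real (deg a)"
    using dp by (simp add: sum.distrib graph_deg_def field_simps)
  also have "(\<Sum>y\<in>nb a. (if a \<in> S then (if y \<notin> S then 1 / real (deg y) else 0)
       else - (if y \<in> S then 1 / real (deg y) else 0))) / real (deg a)
     = (\<Sum>y\<in>nb a. (if a \<in> S then (if y \<notin> S then 1 / (real (deg a) * real (deg y)) else 0)
       else - (if y \<in> S then 1 / (real (deg a) * real (deg y)) else 0)))"
    by (simp add: sum_divide_distrib) (intro sum.cong refl, auto simp: mult.commute)
  also have "\<dots> = (if a \<in> S then (\<Sum>y\<in>V. if y \<notin> S \<and> E a y then 1 / (real (deg a) * real (deg y)) else 0)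
                else - (\<Sum>y\<in>V. if y \<in> S \<and> E a y then 1 / (real (deg a) * real (deg y)) else 0))"
    using finV by (auto simp: sum.inter_filter[symmetric] sum_negf intro!: sum.mono_neutral_cong_left)
  finally show ?thesis .
qed

lemma step_exp: assumes "S \<subseteq> V"
  shows "measure_pmf.expectation (moran_step E V r S) \<phi> = \<phi> S + (r - 1) * D S / W S"
proof -
  have Wp: "W S > 0" using W_ge[OF assms] cardV by linarith
  let ?c = "\<lambda>a. (if a \<in> S then (\<Sum>y\<in>V. if y \<notin> S \<and> E a y then 1 / (real (deg a) * real (deg y)) else 0)
                else - (\<Sum>y\<in>V. if y \<in> S \<and> E a y then 1 / (real (deg a) * real (deg y)) else 0))"
  have "measure_pmf.expectation (moran_step E V r S) \<phi> = (\<Sum>a\<in>V. w S a * (\<phi> S + ?c a))"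
    unfolding step_eq
    apply (subst pmf_expectation_bind[of V])
       apply (simp add: finV)
      apply (auto simp: finV set_nb)[1]
     apply (rule set_emb[OF assms])
    apply (intro sum.cong refl)
    apply (subst inner[OF assms, symmetric])
     apply (simp_all add: pmf_emb[OF assms])
    done
  also have "\<dots> = \<phi> S * (\<Sum>a\<in>V. w S a) + (\<Sum>a\<in>V. w S a * ?c a)"
    by (simp add: distrib_left sum.distrib sum_distrib_left mult.commute)
  also have "(\<Sum>a\<in>V. w S a * ?c a) = (\<Sum>a\<in>V. (r * (\<Sum>y\<in>V. if a \<in> S \<and> y \<notin> S \<and> E a y then 1 / (real (deg a) * real (deg y)) else 0)
        - (\<Sum>y\<in>V. if a \<notin> S \<and> y \<in> S \<and> E a y then 1 / (real (deg a) * real (deg y)) else 0)) / W S)"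
    by (intro sum.cong refl) (auto simp: w_def)
  also have "\<dots> = (r * D S - (\<Sum>a\<in>V. \<Sum>y\<in>V. if a \<notin> S \<and> y \<in> S \<and> E a y then 1 / (real (deg a) * real (deg y)) else 0)) / W S"
    unfolding D_def by (simp add: sum_divide_distrib[symmetric] sum_subtractf sum_distrib_left)
  also have "(\<Sum>a\<in>V. \<Sum>y\<in>V. if a \<notin> S \<and> y \<in> S \<and> E a y then 1 / (real (deg a) * real (deg y)) else 0) = D S"
    unfolding D_def by (subst sum.swap) (auto intro!: sum.cong dest: Esym simp: mult.commute)
  finally show ?thesis using w_sum[OF assms] by (simp add: algebra_simps diff_divide_distrib)
qed

lemma D_nonneg: "D S \<ge> 0"
  unfolding D_def by (intro sum_nonneg) auto

lemma D_lb: assumes "S \<subseteq> V" "S \<noteq> {}" "S \<noteq> V"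
  shows "D S \<ge> 1 / (real (card V) * real (card V))"
proof -
  obtain a b where ab: "a \<in> S" "b \<in> V" "b \<notin> S" "E a b" using cross_edge[OF assms] by blast
  have aV: "a \<in> V" using ab assms by auto
  have "1 / (real (card V) * real (card V)) \<le> 1 / (real (deg a) * real (deg b))"
    using deg_pos[OF aV] deg_pos[OF ab(2)] deg_le[of a] deg_le[of b]
    by (intro divide_left_mono mult_mono mult_pos_pos) auto
  also have "\<dots> = (if a \<in> S \<and> b \<notin> S \<and> E a b then 1 / (real (deg a) * real (deg b)) else 0)"
    using ab by simp
  also have "\<dots> \<le> (\<Sum>y\<in>V. if a \<in> S \<and> y \<notin> S \<and> E a y then 1 / (real (deg a) * real (deg y)) else 0)"
    using ab finV by (intro member_le_sum[of b]) auto
  also have "\<dots> \<le> D S" unfolding D_def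
    using aV finV by (intro member_le_sum[of a]) (auto intro!: sum_nonneg)
  finally show ?thesis .
qed

definition "dlt = (r - 1) / (r * real (card V) ^ 3)"

lemma delta_pos: "dlt > 0"
  unfolding dlt_def using r1 cardV by (auto intro!: divide_pos_pos)

lemma drift: assumes "S \<subseteq> V"
  shows "measure_pmf.expectation (moran_step E V r S) \<phi> \<ge> \<phi> S + (if S \<noteq> {} \<and> S \<noteq> V then dlt else 0)"
proof (cases "S \<noteq> {} \<and> S \<noteq> V")
  case True
  have n: "real (card V) > 0" using cardV by simp
  have Wp: "W S > 0" using W_ge[OF assms] cardV by linarith
  have "dlt = (r - 1) * (1 / (real (card V) * real (card V))) / (r * real (card V))"
    unfolding dlt_def by (simp add: power3_eq_cube mult.assoc)
  also have "\<dots> \<le> (r - 1) * D S / W S"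
    using D_lb[OF assms] True r1 W_ge(2)[OF assms] Wp n D_nonneg[of S]
    by (intro frac_le mult_left_mono mult_nonneg_nonneg) auto
  finally show ?thesis using True step_exp[OF assms] by simp
next
  case False
  have "0 \<le> (r - 1) * D S / W S" using D_nonneg[of S] W_ge[OF assms] cardV r1
    by (intro divide_nonneg_nonneg mult_nonneg_nonneg) auto
  then show ?thesis using step_exp[OF assms] False by auto
qed

definition "L t = {p. set p \<subseteq> Pow V \<and> length p = Suc t}"

lemma finL: "finite (L t)"
  unfolding L_def using finV by (intro finite_lists_length_eq) auto

lemma hdL: "p \<in> L t \<Longrightarrow> hd p \<subseteq> V \<and> hd p \<in> set p"
  unfolding L_def by (cases p) auto

lemma set_path: assumes "S0 \<subseteq> V" shows "set_pmf (moran_path E V r S0 t) \<subseteq> L t"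
proof (induction t)
  case 0 then show ?case using assms by (auto simp: L_def)
next
  case (Suc t)
  show ?case
  proof
    fix q assume "q \<in> set_pmf (moran_path E V r S0 (Suc t))"
    then obtain p S' where p: "p \<in> L t" "S' \<in> set_pmf (moran_step E V r (hd p))" "q = S' # p"
      using Suc by auto
    then show "q \<in> L (Suc t)" using set_step[of "hd p"] hdL[OF p(1)] by (auto simp: L_def)
  qed
qed

lemma finite_step: "S \<subseteq> V \<Longrightarrow> finite (set_pmf (moran_step E V r S))"
  using set_step finV by (meson finite_Pow_iff finite_subset)

lemma exp_path: assumes "S0 \<subseteq> V"
  shows "measure_pmf.expectation (moran_path E V r S0 t) f = (\<Sum>p\<in>L t. pmf (moran_path E V r S0 t) p * f p)"
  by (subst integral_measure_pmf_real[OF finL]) (use set_path[OF assms] in \<open>auto simp: mult.commute\<close>)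

lemma exp_path_Suc: assumes "S0 \<subseteq> V"
  shows "measure_pmf.expectation (moran_path E V r S0 (Suc t)) f =
     (\<Sum>p\<in>L t. pmf (moran_path E V r S0 t) p * measure_pmf.expectation (moran_step E V r (hd p)) (\<lambda>S'. f (S' # p)))"
  apply (simp only: moran_path.simps)
  apply (subst pmf_expectation_bind[OF finL])
  using finite_step hdL set_path[OF assms] by auto

definition "NA = {p. \<not> (\<exists>X\<in>set p. X = {} \<or> X = V)}"

abbreviation "Q S0 t \<equiv> measure_pmf.expectation (moran_path E V r S0 t) (indicator NA :: _ \<Rightarrow> real)"
abbreviation "EP S0 t \<equiv> measure_pmf.expectation (moran_path E V r S0 t) (\<lambda>p. \<phi> (hd p))"

lemma Q_mono_Suc: assumes "S0 \<subseteq> V" shows "Q S0 (Suc t) \<le> Q S0 t"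
proof -
  have "Q S0 (Suc t) = (\<Sum>p\<in>L t. pmf (moran_path E V r S0 t) p *
      measure_pmf.expectation (moran_step E V r (hd p)) (\<lambda>S'. indicator NA (S' # p)))"
    by (rule exp_path_Suc[OF assms])
  also have "\<dots> \<le> (\<Sum>p\<in>L t. pmf (moran_path E V r S0 t) p * indicator NA p)"
  proof (intro sum_mono mult_left_mono pmf_nonneg)
    fix p assume p: "p \<in> L t"
    have "measure_pmf.expectation (moran_step E V r (hd p)) (\<lambda>S'. indicator NA (S' # p) :: real)
       \<le> measure_pmf.expectation (moran_step E V r (hd p)) (\<lambda>S'. indicator NA p)"
      using finite_step hdL[OF p]
      by (intro integral_mono integrable_measure_pmf_finite) (auto simp: NA_def indicator_def)
    then show "measure_pmf.expectation (moran_step E V r (hd p)) (\<lambda>S'. indicator NA (S' # p)) \<le> (indicator NA p :: real)"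
      by simp
  qed
  also have "\<dots> = Q S0 t" by (rule exp_path[OF assms, symmetric])
  finally show ?thesis .
qed

lemma Q_mono: assumes "S0 \<subseteq> V" "i \<le> t" shows "Q S0 t \<le> Q S0 i"
  using assms(2)
proof (induction t)
  case 0 then show ?case by simp
next
  case (Suc t)
  then show ?case using Q_mono_Suc[OF assms(1), of t] by (cases "i = Suc t") auto
qed

lemma EP_lb: assumes "S0 \<subseteq> V" shows "EP S0 t \<ge> \<phi> S0 + dlt * (\<Sum>i<t. Q S0 i)"
proof (induction t)
  case 0 then show ?case by simp
next
  case (Suc t)
  have "\<phi> S0 + dlt * (\<Sum>i<Suc t. Q S0 i) = (\<phi> S0 + dlt * (\<Sum>i<t. Q S0 i)) + dlt * Q S0 t"
    by (simp add: algebra_simps)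
  also have "\<dots> \<le> EP S0 t + dlt * Q S0 t" using Suc by simp
  also have "\<dots> = (\<Sum>p\<in>L t. pmf (moran_path E V r S0 t) p * (\<phi> (hd p) + dlt * indicator NA p))"
    by (simp only: exp_path[OF assms]) (simp add: sum.distrib sum_distrib_left algebra_simps)
  also have "\<dots> \<le> (\<Sum>p\<in>L t. pmf (moran_path E V r S0 t) p *
      measure_pmf.expectation (moran_step E V r (hd p)) (\<lambda>S'. \<phi> (hd (S' # p))))"
  proof (intro sum_mono mult_left_mono pmf_nonneg)
    fix p assume p: "p \<in> L t"
    have "\<phi> (hd p) + dlt * indicator NA p \<le> \<phi> (hd p) + (if hd p \<noteq> {} \<and> hd p \<noteq> V then dlt else 0)"
      using hdL[OF p] delta_pos by (auto simp: NA_def indicator_def)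
    also have "\<dots> \<le> measure_pmf.expectation (moran_step E V r (hd p)) \<phi>"
      using drift hdL[OF p] by blast
    finally show "\<phi> (hd p) + dlt * indicator NA p \<le> measure_pmf.expectation (moran_step E V r (hd p)) (\<lambda>S'. \<phi> (hd (S' # p)))"
      by simp
  qed
  also have "\<dots> = EP S0 (Suc t)" by (rule exp_path_Suc[OF assms, symmetric])
  finally show ?case .
qed

lemma EP_ub: assumes "S0 \<subseteq> V" shows "EP S0 t \<le> \<phi> V"
proof -
  have "EP S0 t = (\<Sum>p\<in>L t. pmf (moran_path E V r S0 t) p * \<phi> (hd p))" by (rule exp_path[OF assms])
  also have "\<dots> \<le> (\<Sum>p\<in>L t. pmf (moran_path E V r S0 t) p * \<phi> V)"
    using hdL finV by (intro sum_mono mult_left_mono pmf_nonneg phi_mono) auto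
  also have "\<dots> = \<phi> V" using sum_pmf_eq_1[OF finL set_path[OF assms]]
    by (simp add: sum_distrib_right[symmetric])
  finally show ?thesis .
qed

lemma phiV_pos: "\<phi> V > 0"
proof -
  obtain a where a: "a \<in> V" using cardV by fastforce
  have "0 < 1 / real (deg a)" using deg_pos[OF a] by simp
  also have "\<dots> \<le> \<phi> V" unfolding phi_set_def using a finV by (intro member_le_sum) auto
  finally show ?thesis .
qed

lemma Q_bound: assumes "S0 \<subseteq> V" shows "real t * Q S0 t \<le> \<phi> V / dlt"
proof -
  have "real t * Q S0 t = (\<Sum>i<t. Q S0 t)" by simp
  also have "\<dots> \<le> (\<Sum>i<t. Q S0 i)" using Q_mono[OF assms] by (intro sum_mono) auto
  also have "\<dots> \<le> \<phi> V / dlt"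
    using EP_lb[OF assms, of t] EP_ub[OF assms, of t] phi_nonneg[of S0] delta_pos
    by (simp add: field_simps)
  finally show ?thesis .
qed

end

theorem corollary8:
  fixes V :: "'a set" and E :: "'a \<Rightarrow> 'a \<Rightarrow> bool"
    and r \<epsilon> :: real and t :: nat and x :: 'a
  assumes "finite V" and "card V \<ge> 2"
    and "\<And>u v. E u v \<Longrightarrow> u \<in> V \<and> v \<in> V"
    and "\<And>u v. E u v \<Longrightarrow> E v u"
    and "\<And>u. \<not> E u u"
    and "graph_connected E V"
    and "r > 1"
    and "0 < \<epsilon>" and "\<epsilon> < 1"
    and "real t \<ge> r / (r - 1) * real (card V) ^ 3 * phi_set E V V / \<epsilon>"
    and "x \<in> V"
  shows "measure_pmf.prob (moran_path E V r {x} t) {p. \<exists>X\<in>set p. X = {} \<or> X = V} \<ge> 1 - \<epsilon>"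
proof -
  interpret moran V E r using assms by unfold_locales auto
  have S0: "{x} \<subseteq> V" using assms by simp
  have nz: "real (card V) > 0" using assms by simp
  have eq: "r / (r - 1) * real (card V) ^ 3 * phi_set E V V / \<epsilon> = phi_set E V V / (dlt * \<epsilon>)"
    unfolding dlt_def using assms nz by (simp add: field_simps)
  have tb: "real t \<ge> phi_set E V V / (dlt * \<epsilon>)" using assms(10) eq by simp
  have pos: "phi_set E V V / (dlt * \<epsilon>) > 0" using phiV_pos delta_pos assms by simp
  have tpos: "real t > 0" using tb pos by linarith
  have "phi_set E V V / dlt = phi_set E V V / (dlt * \<epsilon>) * \<epsilon>" using assms delta_pos by simp
  also have "\<dots> \<le> real t * \<epsilon>" using tb assms by (intro mult_right_mono) auto
  finally have "real t * Q {x} t \<le> real t * \<epsilon>" using Q_bound[OF S0, of t] by linarith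
  then have Qe: "Q {x} t \<le> \<epsilon>" using tpos by simp
  have NAeq: "NA = UNIV - {p. \<exists>X\<in>set p. X = {} \<or> X = V}" unfolding NA_def by auto
  have "Q {x} t = 1 - measure_pmf.prob (moran_path E V r {x} t) {p. \<exists>X\<in>set p. X = {} \<or> X = V}"
    using measure_pmf.prob_compl[of "{p. \<exists>X\<in>set p. X = {} \<or> X = V}" "moran_path E V r {x} t"]
    by (simp add: NAeq)
  then show ?thesis using Qe by linarith
qed

end
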